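(* Let $(\mathcal{S},d_{\mathcal{S}})$, $(\mathcal{A},d_{\mathcal{A}})$ be metric spaces, $\gamma\in[0,1)$, $\rho$ an initial state distribution, $r$ a reward function, and $\pi,\pi'$ policies and $p,p'$ configurations. Then $$\Big|\mathbb{A}_{\pi,p}^{\pi',p'}-\big(\mathbb{A}_{\pi,p}^{\pi,p'}+\mathbb{A}_{\pi,p}^{\pi',p}\big)\Big|\le\int_{\mathcal{S}}\mu_{\pi,p}(ds)\,\mathcal{W}\big(\pi'(\cdot|s),\pi(\cdot|s)\big)\,\big\|A_{\pi,p}^{\pi,p'}\big\|_L.$$
   Context: $r:\mathcal{S}\times\mathcal{A}\times\mathcal{S}\to\mathbb{R}$. A configuration is a Markov kernel $p(\cdot|s,a)$ on $\mathcal{S}$; a policy is a Markov kernel $\pi(\cdot|s)$ on $\mathcal{A}$; $p_\pi(ds'|s)=\int\pi(da|s)p(ds'|s,a)$. Value functions (assumed well defined): $V_{\pi,p}(s)=\int\pi(da|s)\int p(ds'|s,a)(r(s,a,s')+\gamma V_{\pi,p}(s'))$, $Q_{\pi,p}(s,a)=\int p(ds'|s,a)(r(s,a,s')+\gamma V_{\pi,p}(s'))$, $U_{\pi,p}(s,a,s')=r(s,a,s')+\gamma V_{\pi,p}(s')$. $\mu_{\pi,p}=(1-\gamma)\sum_{t\ge0}\gamma^t\rho p_\pi^t$. Relative advantages: $A_{\pi,p}^{\pi',p}(s)=\int\pi'(da|s)(Q_{\pi,p}(s,a)-V_{\pi,p}(s))$; $A_{\pi,p}^{\pi,p'}(s,a)=\int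 p'(ds'|s,a)(U_{\pi,p}(s,a,s')-Q_{\pi,p}(s,a))$, a function on $\mathcal{S}\times\mathcal{A}$; $A_{\pi,p}^{\pi',p'}(s)=\int\pi'(da|s)\int p'(ds'|s,a)(U_{\pi,p}(s,a,s')-V_{\pi,p}(s))$. Expected versions: $\mathbb{A}_{\pi,p}^{\pi',p}=\int\mu_{\pi,p}(ds)A_{\pi,p}^{\pi',p}(s)$, $\mathbb{A}_{\pi,p}^{\pi,p'}=\int\mu_{\pi,p}(ds)\int\pi(da|s)A_{\pi,p}^{\pi,p'}(s,a)$, $\mathbb{A}_{\pi,p}^{\pi',p'}=\int\mu_{\pi,p}(ds)A_{\pi,p}^{\pi',p'}(s)$. $\|\cdot\|_L$ is the Lipschitz semi-norm, with $\mathcal{S}\times\mathcal{A}$ carrying the metric $d_{\mathcal{S}}(s,\bar s)+d_{\mathcal{A}}(a,\bar a)$; $\mathcal{W}(\mu,\nu)=\sup_{\|f\|_L\le1}|\int f\,d(\mu-\nu)|$. *)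

theory Defs
  imports "HOL-Probability.Probability"
begin

definition markov_kernel :: "'x measure \<Rightarrow> 'y measure \<Rightarrow> ('x \<Rightarrow> 'y measure) \<Rightarrow> bool" where
  "markov_kernel M N K \<longleftrightarrow>
     (\<forall>x\<in>space M. prob_space (K x) \<and> sets (K x) = sets N) \<and> K \<in> M \<rightarrow>\<^sub>M subprob_algebra N"

definition p_pi :: "('s \<Rightarrow> 'a measure) \<Rightarrow> ('s \<Rightarrow> 'a \<Rightarrow> 's measure) \<Rightarrow> 's \<Rightarrow> 's measure" where
  "p_pi pol conf s = pol s \<bind> (\<lambda>a. conf s a)"

definition state_dist :: "'s measure \<Rightarrow> ('s \<Rightarrow> 's measure) \<Rightarrow> nat \<Rightarrow> 's measure" where
  "state_dist rho P t = ((\<lambda>m. m \<bind> P) ^^ t) rho"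

definition occupancy :: "real \<Rightarrow> 's measure \<Rightarrow> ('s \<Rightarrow> 'a measure) \<Rightarrow> ('s \<Rightarrow> 'a \<Rightarrow> 's measure) \<Rightarrow> 's measure" where
  "occupancy \<gamma> rho pol conf = measure_of (space rho) (sets rho)
     (\<lambda>B. ennreal (1 - \<gamma>) * (\<Sum>t. ennreal (\<gamma> ^ t) * emeasure (state_dist rho (p_pi pol conf) t) B))"

definition is_value_fun :: "('s \<Rightarrow> 'a \<Rightarrow> 's \<Rightarrow> real) \<Rightarrow> real \<Rightarrow> ('s \<Rightarrow> 'a measure) \<Rightarrow> ('s \<Rightarrow> 'a \<Rightarrow> 's measure) \<Rightarrow> ('s \<Rightarrow> real) \<Rightarrow> bool" where
  "is_value_fun r \<gamma> pol conf V \<longleftrightarrow>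
     (\<forall>s. V s = (\<integral>a. (\<integral>s'. r s a s' + \<gamma> * V s' \<partial>conf s a) \<partial>pol s))"

definition U_fun :: "('s \<Rightarrow> 'a \<Rightarrow> 's \<Rightarrow> real) \<Rightarrow> real \<Rightarrow> ('s \<Rightarrow> real) \<Rightarrow> 's \<Rightarrow> 'a \<Rightarrow> 's \<Rightarrow> real" where
  "U_fun r \<gamma> V s a s' = r s a s' + \<gamma> * V s'"

definition Q_fun :: "('s \<Rightarrow> 'a \<Rightarrow> 's \<Rightarrow> real) \<Rightarrow> real \<Rightarrow> ('s \<Rightarrow> 'a \<Rightarrow> 's measure) \<Rightarrow> ('s \<Rightarrow> real) \<Rightarrow> 's \<Rightarrow> 'a \<Rightarrow> real" where
  "Q_fun r \<gamma> conf V s a = (\<integral>s'. r s a s' + \<gamma> * V s' \<partial>conf s a)"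

text \<open>Relative advantages. Arguments: reward, discount, (pol, conf) with value function V, new pol' / conf'.\<close>
definition adv_pol :: "('s \<Rightarrow> 'a \<Rightarrow> 's \<Rightarrow> real) \<Rightarrow> real \<Rightarrow> ('s \<Rightarrow> 'a \<Rightarrow> 's measure) \<Rightarrow> ('s \<Rightarrow> real)
    \<Rightarrow> ('s \<Rightarrow> 'a measure) \<Rightarrow> 's \<Rightarrow> real" where
  "adv_pol r \<gamma> conf V pol' s = (\<integral>a. Q_fun r \<gamma> conf V s a - V s \<partial>pol' s)"

definition adv_conf :: "('s \<Rightarrow> 'a \<Rightarrow> 's \<Rightarrow> real) \<Rightarrow> real \<Rightarrow> ('s \<Rightarrow> 'a \<Rightarrow> 's measure) \<Rightarrow> ('s \<Rightarrow> real)
    \<Rightarrow> ('s \<Rightarrow> 'a \<Rightarrow> 's measure) \<Rightarrow> 's \<Rightarrow> 'a \<Rightarrow> real" where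
  "adv_conf r \<gamma> conf V conf' s a = (\<integral>s'. U_fun r \<gamma> V s a s' - Q_fun r \<gamma> conf V s a \<partial>conf' s a)"

definition adv_both :: "('s \<Rightarrow> 'a \<Rightarrow> 's \<Rightarrow> real) \<Rightarrow> real \<Rightarrow> ('s \<Rightarrow> real)
    \<Rightarrow> ('s \<Rightarrow> 'a measure) \<Rightarrow> ('s \<Rightarrow> 'a \<Rightarrow> 's measure) \<Rightarrow> 's \<Rightarrow> real" where
  "adv_both r \<gamma> V pol' conf' s = (\<integral>a. (\<integral>s'. U_fun r \<gamma> V s a s' - V s \<partial>conf' s a) \<partial>pol' s)"

definition lip_norm_SA :: "('s::metric_space \<Rightarrow> 'a::metric_space \<Rightarrow> real) \<Rightarrow> ennreal" where
  "lip_norm_SA g = (INF C \<in> {C::real. 0 \<le> C \<and>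
       (\<forall>s a s0 a0. \<bar>g s a - g s0 a0\<bar> \<le> C * (dist s s0 + dist a a0))}. ennreal C)"

text \<open>Wasserstein-1 distance (Kantorovich dual form), value in [0,\<infinity>].\<close>
definition wasserstein :: "'a::metric_space measure \<Rightarrow> 'a measure \<Rightarrow> ennreal" where
  "wasserstein M N = (SUP f \<in> {f::'a \<Rightarrow> real. \<forall>x y. \<bar>f x - f y\<bar> \<le> dist x y}.
       ennreal \<bar>(\<integral>x. f x \<partial>M) - (\<integral>x. f x \<partial>N)\<bar>)"

end

theory Submission
  imports Defs
begin

lemma wass_zero_eq:
  fixes M N :: "'a::metric_space measure"
  assumes M: "prob_space M" "sets M = sets borel"
    and N: "prob_space N" "sets N = sets borel"
    and W: "wasserstein M N = 0"
  shows "M = N"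
proof -
  have lipeq: "(\<integral>x. f x \<partial>M) = (\<integral>x. f x \<partial>N)" if "\<forall>x y. \<bar>f x - f y\<bar> \<le> dist x y" for f
  proof -
    have "ennreal \<bar>(\<integral>x. f x \<partial>M) - (\<integral>x. f x \<partial>N)\<bar> \<le> wasserstein M N"
      unfolding wasserstein_def by (rule SUP_upper) (use that in auto)
    then show ?thesis using W by (simp add: ennreal_eq_0_iff)
  qed
  have closed_eq: "measure M F = measure N F" if F: "closed F" for F
  proof (cases "F = {}")
    case True then show ?thesis by simp
  next
    case False
    define f where "f n x = max 0 (1 - real (Suc n) * infdist x F)" for n x
    have cont: "continuous_on UNIV (f n)" for n
      unfolding f_def by (intro continuous_intros)
    have bm: "f n \<in> borel_measurable borel" for n
      by (rule borel_measurable_continuous_onI[OF cont])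
    have lip: "\<bar>f n x - f n y\<bar> \<le> real (Suc n) * dist x y" for n x y
    proof -
      have "\<bar>f n x - f n y\<bar> \<le> \<bar>real (Suc n) * infdist x F - real (Suc n) * infdist y F\<bar>"
        unfolding f_def by (smt (verit))
      also have "\<dots> = real (Suc n) * \<bar>infdist x F - infdist y F\<bar>"
        by (simp add: abs_mult right_diff_distrib[symmetric])
      also have "\<dots> \<le> real (Suc n) * dist x y"
        by (intro mult_left_mono infdist_triangle_abs) auto
      finally show ?thesis .
    qed
    have eqn: "(\<integral>x. f n x \<partial>M) = (\<integral>x. f n x \<partial>N)" for n
    proof -
      have "(\<integral>x. f n x / real (Suc n) \<partial>M) = (\<integral>x. f n x / real (Suc n) \<partial>N)"
      proof (rule lipeq, intro allI)
        fix x y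
        have "\<bar>f n x / real (Suc n) - f n y / real (Suc n)\<bar> = \<bar>f n x - f n y\<bar> / real (Suc n)"
          by (simp add: diff_divide_distrib[symmetric])
        also have "\<dots> \<le> dist x y" using lip[of n x y] by (simp add: divide_le_eq mult.commute)
        finally show "\<bar>f n x / real (Suc n) - f n y / real (Suc n)\<bar> \<le> dist x y" .
      qed
      then show ?thesis by simp
    qed
    have lim: "(\<lambda>n. f n x) \<longlonglongrightarrow> indicator F x" for x
    proof (cases "x \<in> F")
      case True
      then have "infdist x F = 0" using in_closed_iff_infdist_zero[OF F False] by simp
      then show ?thesis using True by (simp add: f_def)
    next
      case xF: False
      then have d: "infdist x F > 0" using in_closed_iff_infdist_zero[OF F False] infdist_nonneg[of x F] by simp
      obtain k :: nat where k: "1 / infdist x F < real k" using reals_Archimedean2 by blast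
      have "eventually (\<lambda>n. f n x = 0) sequentially"
        unfolding eventually_sequentially
      proof (intro exI allI impI)
        fix n assume "k \<le> n"
        then have "1 < real (Suc n) * infdist x F" using k d by (simp add: divide_less_eq) (smt (verit) of_nat_mono mult_right_mono)
        then show "f n x = 0" by (simp add: f_def)
      qed
      then have "(\<lambda>n. f n x) \<longlonglongrightarrow> 0" by (rule tendsto_eventually)
      then show ?thesis using xF by simp
    qed
    have conv: "(\<lambda>n. \<integral>x. f n x \<partial>K) \<longlonglongrightarrow> (\<integral>x. indicator F x \<partial>K)"
      if K: "prob_space K" "sets K = sets borel" for K :: "'a measure"
    proof (rule integral_dominated_convergence[where w="\<lambda>_. 1"])
      have Fs: "F \<in> sets K" using K F by simp
      show "indicator F \<in> borel_measurable K" using Fs by simp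
      show "f n \<in> borel_measurable K" for n using bm[of n] measurable_cong_sets[OF K(2) refl] by metis
      show "integrable K (\<lambda>_. 1::real)" using K by (simp add: prob_space.finite_measure finite_measure.integrable_const)
      show "AE x in K. (\<lambda>n. f n x) \<longlonglongrightarrow> indicator F x" using lim by simp
      show "AE x in K. norm (f n x) \<le> 1" for n
        by (auto simp: f_def infdist_nonneg)
    qed
    have "(\<lambda>n. \<integral>x. f n x \<partial>M) \<longlonglongrightarrow> measure M F"
      using conv[OF M] F M by simp
    moreover have "(\<lambda>n. \<integral>x. f n x \<partial>M) \<longlonglongrightarrow> measure N F"
      using conv[OF N] F N eqn by simp
    ultimately show ?thesis using LIMSEQ_unique by blast
  qed
  have sc: "sets borel = sigma_sets (UNIV::'a set) (Collect closed)"
    by (metis borel_eq_closed sets_measure_of top_greatest Pow_UNIV)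
  show ?thesis
  proof (rule measure_eqI_generator_eq[where E="Collect closed" and \<Omega>=UNIV and A="\<lambda>_. UNIV"])
    show "Int_stable (Collect closed)" by (auto simp: Int_stable_def)
    show "emeasure M X = emeasure N X" if "X \<in> Collect closed" for X
      using closed_eq[of X] that M N
      by (simp add: prob_space.finite_measure finite_measure.emeasure_eq_measure)
  qed (use M N sc in \<open>auto simp: prob_space.finite_measure finite_measure.emeasure_eq_measure\<close>)
qed


lemma int_minus_const:
  fixes f :: "'a \<Rightarrow> real"
  assumes "prob_space M" "integrable M f"
  shows "(\<integral>x. f x - c \<partial>M) = integral\<^sup>L M f - c"
proof -
  have "integrable M (\<lambda>_. c)" using assms(1) by (simp add: prob_space.finite_measure finite_measure.integrable_const)
  then show ?thesis using assms by (simp add: Bochner_Integration.integral_diff prob_space.prob_space)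
qed

lemma wass_lip_bound:
  fixes M N :: "'a::metric_space measure" and g :: "'a \<Rightarrow> real"
  assumes M: "prob_space M" and N: "prob_space N"
    and gM: "integrable M g" and gN: "integrable N g"
    and C: "0 \<le> C" and lip: "\<And>a a0. \<bar>g a - g a0\<bar> \<le> C * dist a a0"
  shows "ennreal \<bar>(\<integral>x. g x \<partial>M) - (\<integral>x. g x \<partial>N)\<bar> \<le> wasserstein M N * ennreal C"
proof (cases "C = 0")
  case True
  then have "g a = g a0" for a a0 using lip[of a a0] by simp
  then have "g = (\<lambda>_. g undefined)" by auto
  then have "(\<integral>x. g x \<partial>M) = (\<integral>x. g x \<partial>N)"
    using M N by (metis lebesgue_integral_const prob_space.prob_space scaleR_one)
  then show ?thesis by simp
next
  case False
  then have Cp: "C > 0" using C by simp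
  have "ennreal \<bar>(\<integral>x. g x / C \<partial>M) - (\<integral>x. g x / C \<partial>N)\<bar> \<le> wasserstein M N"
    unfolding wasserstein_def
  proof (rule SUP_upper, safe)
    fix x y
    have "\<bar>g x / C - g y / C\<bar> = \<bar>g x - g y\<bar> / C" using Cp
      by (simp add: diff_divide_distrib[symmetric])
    also have "\<dots> \<le> dist x y" using lip[of x y] Cp by (simp add: divide_le_eq mult.commute)
    finally show "\<bar>g x / C - g y / C\<bar> \<le> dist x y" .
  qed
  then have "ennreal C * ennreal \<bar>(\<integral>x. g x / C \<partial>M) - (\<integral>x. g x / C \<partial>N)\<bar> \<le> ennreal C * wasserstein M N"
    by (rule mult_left_mono) simp
  moreover have "ennreal C * ennreal \<bar>(\<integral>x. g x / C \<partial>M) - (\<integral>x. g x / C \<partial>N)\<bar>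
      = ennreal \<bar>(\<integral>x. g x \<partial>M) - (\<integral>x. g x \<partial>N)\<bar>"
    using Cp by (simp add: ennreal_mult[symmetric] abs_mult diff_divide_distrib[symmetric])
  ultimately show ?thesis by (simp add: mult.commute)
qed

lemma lip_attain:
  fixes g :: "'s::metric_space \<Rightarrow> 'a::metric_space \<Rightarrow> real"
  defines "S \<equiv> {C::real. 0 \<le> C \<and> (\<forall>s a s0 a0. \<bar>g s a - g s0 a0\<bar> \<le> C * (dist s s0 + dist a a0))}"
  assumes ne: "S \<noteq> {}"
  shows "Inf S \<in> S" "lip_norm_SA g = ennreal (Inf S)"
proof -
  have bdd: "bdd_below S" unfolding S_def by (rule bdd_belowI[of _ 0]) auto
  have c0: "0 \<le> Inf S" using ne by (rule cInf_greatest) (auto simp: S_def)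
  have "\<bar>g s a - g s0 a0\<bar> \<le> Inf S * (dist s s0 + dist a a0)" for s a s0 a0
  proof (cases "dist s s0 + dist a a0 = 0")
    case True
    from ne obtain C where "C \<in> S" by auto
    then have "\<bar>g s a - g s0 a0\<bar> \<le> C * (dist s s0 + dist a a0)" unfolding S_def by blast
    then show ?thesis using True by simp
  next
    case False
    then have dp: "dist s s0 + dist a a0 > 0" by (smt (verit) zero_le_dist)
    have "\<bar>g s a - g s0 a0\<bar> / (dist s s0 + dist a a0) \<le> Inf S"
      using ne proof (rule cInf_greatest)
      fix C assume "C \<in> S"
      then show "\<bar>g s a - g s0 a0\<bar> / (dist s s0 + dist a a0) \<le> C"
        using dp unfolding S_def by (auto simp: divide_le_eq)
    qed
    then show ?thesis using dp by (simp add: divide_le_eq)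
  qed
  then show inS: "Inf S \<in> S" using c0 unfolding S_def by blast
  show "lip_norm_SA g = ennreal (Inf S)"
    unfolding lip_norm_SA_def S_def[symmetric]
  proof (rule antisym)
    show "(INF C\<in>S. ennreal C) \<le> ennreal (Inf S)" by (rule INF_lower[OF inS])
    show "ennreal (Inf S) \<le> (INF C\<in>S. ennreal C)"
      by (rule INF_greatest, rule ennreal_leI, rule cInf_lower[OF _ bdd])
  qed
qed

theorem lemma4:
  fixes r :: "'s::metric_space \<Rightarrow> 'a::metric_space \<Rightarrow> 's \<Rightarrow> real"
    and \<gamma> :: real
    and rho :: "'s measure"
    and pol pol' :: "'s \<Rightarrow> 'a measure"
    and conf conf' :: "'s \<Rightarrow> 'a \<Rightarrow> 's measure"
    and V :: "'s \<Rightarrow> real"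
  assumes gamma: "0 \<le> \<gamma>" "\<gamma> < 1"
    and rho: "prob_space rho" "sets rho = sets borel"
    and r_meas: "(\<lambda>(s, a, s'). r s a s') \<in> borel_measurable borel"
    and pol: "markov_kernel borel borel pol"
    and pol': "markov_kernel borel borel pol'"
    and conf: "markov_kernel borel borel (\<lambda>(s, a). conf s a)"
    and conf': "markov_kernel borel borel (\<lambda>(s, a). conf' s a)"
    and V: "is_value_fun r \<gamma> pol conf V"
    \<comment> \<open>well-definedness of all integrals involved\<close>
    and int_U: "\<And>s a. integrable (conf s a) (U_fun r \<gamma> V s a)"
    and int_U': "\<And>s a. integrable (conf' s a) (U_fun r \<gamma> V s a)"
    and int_Q: "\<And>s. integrable (pol s) (Q_fun r \<gamma> conf V s)"
    and int_Q': "\<And>s. integrable (pol' s) (Q_fun r \<gamma> conf V s)"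
    and int_PU: "\<And>s. integrable (pol s) (\<lambda>a. \<integral>s'. U_fun r \<gamma> V s a s' \<partial>conf' s a)"
    and int_PU': "\<And>s. integrable (pol' s) (\<lambda>a. \<integral>s'. U_fun r \<gamma> V s a s' \<partial>conf' s a)"
    and int_mu1: "integrable (occupancy \<gamma> rho pol conf) (adv_both r \<gamma> V pol' conf')"
    and int_mu2: "integrable (occupancy \<gamma> rho pol conf)
                    (\<lambda>s. \<integral>a. adv_conf r \<gamma> conf V conf' s a \<partial>pol s)"
    and int_mu3: "integrable (occupancy \<gamma> rho pol conf) (adv_pol r \<gamma> conf V pol')"
  shows "ennreal \<bar>(\<integral>s. adv_both r \<gamma> V pol' conf' s \<partial>occupancy \<gamma> rho pol conf)
            - ((\<integral>s. (\<integral>a. adv_conf r \<gamma> conf V conf' s a \<partial>pol s) \<partial>occupancy \<gamma> rho pol conf)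
               + (\<integral>s. adv_pol r \<gamma> conf V pol' s \<partial>occupancy \<gamma> rho pol conf))\<bar>
         \<le> (\<integral>\<^sup>+ s. wasserstein (pol' s) (pol s) * lip_norm_SA (adv_conf r \<gamma> conf V conf')
              \<partial>occupancy \<gamma> rho pol conf)"
proof -
  define mu where "mu = occupancy \<gamma> rho pol conf"
  define g where "g = adv_conf r \<gamma> conf V conf'"
  define f1 where "f1 = adv_both r \<gamma> V pol' conf'"
  define f2 where "f2 = (\<lambda>s. \<integral>a. g s a \<partial>pol s)"
  define f3 where "f3 = adv_pol r \<gamma> conf V pol'"
  define D where "D = (\<lambda>s. (\<integral>a. g s a \<partial>pol' s) - (\<integral>a. g s a \<partial>pol s))"
  have Ppol: "prob_space (pol s)" "sets (pol s) = sets borel" for s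
    using pol by (auto simp: markov_kernel_def)
  have Ppol': "prob_space (pol' s)" "sets (pol' s) = sets borel" for s
    using pol' by (auto simp: markov_kernel_def)
  have Pconf': "prob_space (conf' s a)" for s a
    using conf' unfolding markov_kernel_def by (metis UNIV_I case_prod_conv space_borel)
  define h where "h s a = (\<integral>s'. U_fun r \<gamma> V s a s' \<partial>conf' s a)" for s a
  define q where "q s a = Q_fun r \<gamma> conf V s a" for s a
  have g_eq: "g s = (\<lambda>a. h s a - q s a)" for s
  proof
    fix a
    have "g s a = (\<integral>s'. U_fun r \<gamma> V s a s' - q s a \<partial>conf' s a)"
      by (simp add: g_def adv_conf_def q_def)
    also have "\<dots> = h s a - q s a"
      using int_U' Pconf'[of s a] by (simp add: h_def int_minus_const)
    finally show "g s a = h s a - q s a" .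
  qed
  have intg: "integrable (pol s) (g s)" "integrable (pol' s) (g s)" for s
    using int_PU int_Q int_PU' int_Q' by (auto simp: g_eq h_def q_def)
  have Vq: "V s = (\<integral>a. q s a \<partial>pol s)" for s
    using V unfolding is_value_fun_def q_def Q_fun_def by blast
  have pt: "f1 s - (f2 s + f3 s) = D s" for s
  proof -
    have "f1 s = (\<integral>a. h s a - V s \<partial>pol' s)"
      unfolding f1_def adv_both_def
      using int_U' Pconf' by (intro Bochner_Integration.integral_cong refl)
        (simp add: h_def int_minus_const)
    also have "\<dots> = (\<integral>a. h s a \<partial>pol' s) - V s"
      using int_PU'[of s] Ppol'(1)[of s] by (simp add: h_def int_minus_const)
    finally have 1: "f1 s = (\<integral>a. h s a \<partial>pol' s) - V s" .
    have 2: "f2 s = (\<integral>a. h s a \<partial>pol s) - (\<integral>a. q s a \<partial>pol s)"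
      unfolding f2_def g_eq using int_PU[of s] int_Q[of s]
      by (simp add: h_def q_def)
    have 3: "f3 s = (\<integral>a. q s a \<partial>pol' s) - V s"
      unfolding f3_def adv_pol_def using int_Q'[of s] Ppol'(1)[of s]
      by (simp add: q_def int_minus_const)
    have 4: "D s = ((\<integral>a. h s a \<partial>pol' s) - (\<integral>a. q s a \<partial>pol' s)) - ((\<integral>a. h s a \<partial>pol s) - (\<integral>a. q s a \<partial>pol s))"
      unfolding D_def g_eq using int_PU int_Q int_PU' int_Q'
      by (simp add: h_def q_def)
    show ?thesis using 1 2 3 4 Vq[of s] by simp
  qed
  have ptb: "ennreal \<bar>D s\<bar> \<le> wasserstein (pol' s) (pol s) * lip_norm_SA g" for s
  proof (cases "{C::real. 0 \<le> C \<and> (\<forall>s a s0 a0. \<bar>g s a - g s0 a0\<bar> \<le> C * (dist s s0 + dist a a0))} = {}")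
    case True
    then have L: "lip_norm_SA g = \<top>" unfolding lip_norm_SA_def by (simp add: True)
    show ?thesis
    proof (cases "wasserstein (pol' s) (pol s) = 0")
      case True
      then have "pol' s = pol s" using wass_zero_eq Ppol Ppol' by blast
      then show ?thesis by (simp add: D_def)
    next
      case False
      then show ?thesis using L by (simp add: ennreal_mult_top)
    qed
  next
    case False
    note la = lip_attain[OF False]
    show ?thesis unfolding la(2) D_def
    proof (rule wass_lip_bound[OF Ppol'(1) Ppol(1) intg(2) intg(1)])
      show "0 \<le> Inf {C::real. 0 \<le> C \<and> (\<forall>s a s0 a0. \<bar>g s a - g s0 a0\<bar> \<le> C * (dist s s0 + dist a a0))}"
        using la(1) by blast
      fix a a0
      show "\<bar>g s a - g s a0\<bar> \<le> Inf {C::real. 0 \<le> C \<and> (\<forall>s a s0 a0. \<bar>g s a - g s0 a0\<bar> \<le> C * (dist s s0 + dist a a0))} * dist a a0"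
        using la(1) by (metis (mono_tags, lifting) add_0 dist_self mem_Collect_eq)
    qed
  qed
  have intD: "integrable mu D"
  proof -
    have "integrable mu (\<lambda>s. f1 s - (f2 s + f3 s))"
      using int_mu1 int_mu2 int_mu3 by (auto simp: mu_def f1_def f2_def f3_def g_def)
    then show ?thesis using pt by simp
  qed
  have "(\<integral>s. f1 s \<partial>mu) - ((\<integral>s. f2 s \<partial>mu) + (\<integral>s. f3 s \<partial>mu)) = (\<integral>s. D s \<partial>mu)"
  proof -
    have "(\<integral>s. f1 s \<partial>mu) - ((\<integral>s. f2 s \<partial>mu) + (\<integral>s. f3 s \<partial>mu)) = (\<integral>s. f1 s - (f2 s + f3 s) \<partial>mu)"
      using int_mu1 int_mu2 int_mu3 by (simp add: mu_def f1_def f2_def f3_def g_def)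
    then show ?thesis using pt by simp
  qed
  then have "ennreal \<bar>(\<integral>s. f1 s \<partial>mu) - ((\<integral>s. f2 s \<partial>mu) + (\<integral>s. f3 s \<partial>mu))\<bar>
      \<le> ennreal (\<integral>s. \<bar>D s\<bar> \<partial>mu)"
    by (simp add: ennreal_leI)
  also have "\<dots> = (\<integral>\<^sup>+ s. ennreal \<bar>D s\<bar> \<partial>mu)"
    using intD by (intro nn_integral_eq_integral[symmetric]) auto
  also have "\<dots> \<le> (\<integral>\<^sup>+ s. wasserstein (pol' s) (pol s) * lip_norm_SA g \<partial>mu)"
    by (intro nn_integral_mono ptb)
  finally show ?thesis unfolding mu_def f1_def f2_def f3_def g_def .
qed

end
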